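(* Let $T\ge 2$ be an integer, $v>0$, $\theta\in(0,1)$, $\beta\in(0,1]$, and suppose $\theta\ge\beta>\theta^T$. Let $\nu:=\lfloor \log\beta/\log\theta\rfloor$. Consider the stopping problem on times $\{0,1,\dots,T\}$ in which, from the perspective of time $t$, stopping at time $t+j$ ($0\le j\le T-t$) has value $\theta^{T-t}v$ if $j=0$ and $\beta\theta^{T-t-j}v$ if $j\ge1$. A (pure) strategy is a map $\sigma:\{0,\dots,T\}\to\{0,1\}$ with $\sigma(T)=1$ ($1$ = stop, $0$ = continue); for $t<T$ let $\tau_\sigma(t)=\min\{s>t:\sigma(s)=1\}$. Define: - the naive strategy $\sigma_0$: $\sigma_0(T)=1$ and for $t<T$, $\sigma_0(t)=1$ iff $\theta^{T-t}v\ge\max_{1\le j\le T-t}\beta\theta^{T-t-j}v$; - the update $\sigma\mapsto\sigma'$: $\sigma'(T)=1$ and for $t<T$, $\sigma'(t)=1$ iff $\theta^{T-t}v\ge\beta\theta^{T-\tau_\sigma(t)}v$; set $\sigma_{n+1}=\sigma_n'$ for $n\ge 0$; - the sophisticated strategy $\sigma_S$: $\sigma_S(T)=1$ and, backward for $t=T-1,\dots,0$, $\sigma_S(t)=1$ iff $\theta^{T-t}v\ge\beta\theta^{T-\tau_{\sigma_S}(t)}v$. Then $\nu\in\{1,2,\dots,T-1\}$, and $\sigma_n=\sigma_S$ for $n=\lceil T/\nu\rceil$; that is, the naive strategy is turned into the sophisticated one after $\lceil T/\nu\rceil$ rounds of training.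
   Context: This is the present-biased optimal stopping problem with immediate reward: stopping at absolute time $s$ yields reward $\theta^{T-s}v$ (so waiting increases the reward by a factor $1/\theta$ per period), and any reward not received immediately is additionally discounted by the present-bias factor $\beta$. The problem is state-independent, so strategies depend only on time. Ties are broken in favour of stopping. In each training round the agent at time $t$ chooses whether to stop now, taking as given that from time $t+1$ on she follows the previous round's strategy. *)

theory Defs
  imports Complex_Main
begin

text \<open>Strategies are maps nat => bool (True = stop); only times 0..T matter,
  and all strategies below stop at every time t >= T.\<close>

definition stop_time :: "nat \<Rightarrow> (nat \<Rightarrow> bool) \<Rightarrow> nat \<Rightarrow> nat" where
  "stop_time T \<sigma> t = (LEAST s. t < s \<and> s \<le> T \<and> \<sigma> s)"

definition naive_strategy :: "nat \<Rightarrow> real \<Rightarrow> real \<Rightarrow> real \<Rightarrow> nat \<Rightarrow> bool" where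
  "naive_strategy T \<theta> \<beta> v t =
     (if T \<le> t then True
      else \<theta> ^ (T - t) * v \<ge> Max ((\<lambda>j. \<beta> * \<theta> ^ (T - t - j) * v) ` {1..T - t}))"

definition update_strategy ::
  "nat \<Rightarrow> real \<Rightarrow> real \<Rightarrow> real \<Rightarrow> (nat \<Rightarrow> bool) \<Rightarrow> nat \<Rightarrow> bool" where
  "update_strategy T \<theta> \<beta> v \<sigma> t =
     (if T \<le> t then True
      else \<theta> ^ (T - t) * v \<ge> \<beta> * \<theta> ^ (T - stop_time T \<sigma> t) * v)"

definition trained_strategy :: "nat \<Rightarrow> real \<Rightarrow> real \<Rightarrow> real \<Rightarrow> nat \<Rightarrow> nat \<Rightarrow> bool" where
  "trained_strategy T \<theta> \<beta> v n = (update_strategy T \<theta> \<beta> v ^^ n) (naive_strategy T \<theta> \<beta> v)"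

text \<open>Backward induction: stage k has decided times T-k..T (and all later times = stop).\<close>
primrec soph_stage :: "nat \<Rightarrow> real \<Rightarrow> real \<Rightarrow> real \<Rightarrow> nat \<Rightarrow> nat \<Rightarrow> bool" where
  "soph_stage T \<theta> \<beta> v 0 = (\<lambda>t. True)"
| "soph_stage T \<theta> \<beta> v (Suc k) =
     (let \<sigma> = soph_stage T \<theta> \<beta> v k; t = T - Suc k
      in \<sigma>(t := (\<theta> ^ (T - t) * v \<ge> \<beta> * \<theta> ^ (T - stop_time T \<sigma> t) * v)))"

definition soph_strategy :: "nat \<Rightarrow> real \<Rightarrow> real \<Rightarrow> real \<Rightarrow> nat \<Rightarrow> bool" where
  "soph_strategy T \<theta> \<beta> v = soph_stage T \<theta> \<beta> v T"

end

theory Submission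
  imports Defs
begin

lemma pow_ge_iff:
  fixes \<theta> \<beta> :: real and k :: nat
  assumes "0 < \<theta>" "\<theta> < 1" "0 < \<beta>"
  shows "(\<beta> \<le> \<theta> ^ k) \<longleftrightarrow> int k \<le> \<lfloor>ln \<beta> / ln \<theta>\<rfloor>"
proof -
  have l: "ln \<theta> < 0" using assms by simp
  have "(\<beta> \<le> \<theta> ^ k) \<longleftrightarrow> ln \<beta> \<le> ln (\<theta> ^ k)"
    using assms by (simp add: ln_le_cancel_iff)
  also have "\<dots> \<longleftrightarrow> ln \<beta> \<le> real k * ln \<theta>" using assms by (simp add: ln_realpow)
  also have "\<dots> \<longleftrightarrow> real k \<le> ln \<beta> / ln \<theta>" using l by (simp add: le_divide_eq_1 pos_le_divide_eq neg_le_divide_eq)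
  also have "\<dots> \<longleftrightarrow> int k \<le> \<lfloor>ln \<beta> / ln \<theta>\<rfloor>" by (simp add: le_floor_iff)
  finally show ?thesis .
qed

lemma cmp_iff:
  fixes \<theta> \<beta> v :: real
  assumes "0 < \<theta>" "0 < v" "t < s" "s \<le> T"
  shows "(\<beta> * \<theta> ^ (T - s) * v \<le> \<theta> ^ (T - t) * v) \<longleftrightarrow> \<beta> \<le> \<theta> ^ (s - t)"
proof -
  have e: "\<theta> ^ (T - t) = \<theta> ^ (s - t) * \<theta> ^ (T - s)"
    using assms by (simp add: power_add[symmetric])
  have p: "0 < \<theta> ^ (T - s) * v" using assms by simp
  show ?thesis unfolding e using p
    by (metis (no_types, lifting) mult.assoc mult.commute mult_le_cancel_left_pos)
qed

lemma stop_time_interval: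
  assumes "t < T" "1 \<le> m"
  shows "stop_time T (\<lambda>s. T \<le> s + m) t = max (t+1) (T - m)"
  unfolding stop_time_def
proof (rule Least_equality)
  show "t < max (t + 1) (T - m) \<and> max (t + 1) (T - m) \<le> T \<and> T \<le> max (t + 1) (T - m) + m"
    using assms by auto
next
  fix y assume "t < y \<and> y \<le> T \<and> T \<le> y + m"
  then show "max (t + 1) (T - m) \<le> y" by auto
qed

lemma stop_time_true:
  assumes "t < T"
  shows "stop_time T (\<lambda>s. True) t = t+1"
  unfolding stop_time_def
  by (rule Least_equality) (use assms in auto)

theorem proposition5p2:
  fixes T :: nat and v \<theta> \<beta> :: real
  assumes "T \<ge> 2" and "v > 0" and "0 < \<theta>" and "\<theta> < 1" and "0 < \<beta>" and "\<beta> \<le> 1"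
    and "\<theta> \<ge> \<beta>" and "\<beta> > \<theta> ^ T"
  shows "let \<nu> = \<lfloor>ln \<beta> / ln \<theta>\<rfloor> in
           1 \<le> \<nu> \<and> \<nu> \<le> int T - 1 \<and>
           (\<forall>t\<le>T. trained_strategy T \<theta> \<beta> v (nat \<lceil>real T / real_of_int \<nu>\<rceil>) t
                    = soph_strategy T \<theta> \<beta> v t)"
proof -
  define \<nu> where "\<nu> = \<lfloor>ln \<beta> / ln \<theta>\<rfloor>"
  have PG: "\<And>k. (\<beta> \<le> \<theta> ^ k) \<longleftrightarrow> int k \<le> \<nu>"
    unfolding \<nu>_def using pow_ge_iff assms by blast
  have n1: "1 \<le> \<nu>" using PG[of 1] assms by simp
  have n2: "\<nu> \<le> int T - 1" using PG[of T] assms by simp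
  define d where "d = nat \<nu>"
  have dn: "int d = \<nu>" using n1 d_def by simp
  have d1: "1 \<le> d" using n1 dn by simp
  have PD: "\<And>k. (\<beta> \<le> \<theta> ^ k) \<longleftrightarrow> k \<le> d" using PG dn by (metis of_nat_le_iff)
  have naive: "naive_strategy T \<theta> \<beta> v = (\<lambda>t. T \<le> t + d)"
  proof
    fix t show "naive_strategy T \<theta> \<beta> v t = (T \<le> t + d)"
    proof (cases "T \<le> t")
      case True then show ?thesis by (simp add: naive_strategy_def)
    next
      case False
      have M: "Max ((\<lambda>j. \<beta> * \<theta> ^ (T - t - j) * v) ` {1..T - t}) = \<beta> * v"
      proof (rule Max_eqI)
        show "finite ((\<lambda>j. \<beta> * \<theta> ^ (T - t - j) * v) ` {1..T - t})" by simp
        show "\<beta> * v \<in> (\<lambda>j. \<beta> * \<theta> ^ (T - t - j) * v) ` {1..T - t}"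
          using False by (intro image_eqI[where x="T-t"]) auto
      next
        fix y assume "y \<in> (\<lambda>j. \<beta> * \<theta> ^ (T - t - j) * v) ` {1..T - t}"
        then obtain j where y: "y = \<beta> * \<theta> ^ (T - t - j) * v" by auto
        have "\<theta> ^ (T - t - j) \<le> 1" using assms by (simp add: power_le_one)
        then show "y \<le> \<beta> * v" unfolding y using assms
          by (simp add: mult_le_cancel_right_pos)
      qed
      have "(\<beta> * v \<le> \<theta> ^ (T - t) * v) \<longleftrightarrow> \<beta> \<le> \<theta> ^ (T - t)"
        using assms by simp
      then show ?thesis using False M PD[of "T-t"] by (auto simp: naive_strategy_def)
    qed
  qed
  have upd: "update_strategy T \<theta> \<beta> v (\<lambda>s. T \<le> s + m) = (\<lambda>s. T \<le> s + (m + d))"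
    if m1: "1 \<le> m" for m
  proof
    fix t show "update_strategy T \<theta> \<beta> v (\<lambda>s. T \<le> s + m) t = (T \<le> t + (m + d))"
    proof (cases "T \<le> t")
      case True then show ?thesis by (simp add: update_strategy_def)
    next
      case False
      define s where "s = max (t+1) (T - m)"
      have st: "stop_time T (\<lambda>s. T \<le> s + m) t = s" using stop_time_interval False m1 s_def by simp
      have "t < s" "s \<le> T" using False s_def by auto
      then have "update_strategy T \<theta> \<beta> v (\<lambda>s. T \<le> s + m) t = (s - t \<le> d)"
        using False st cmp_iff[OF assms(3) assms(2)] PD by (simp add: update_strategy_def)
      also have "\<dots> = (T \<le> t + (m + d))" using s_def d1 False by auto
      finally show ?thesis .
    qed
  qed
  have trained: "trained_strategy T \<theta> \<beta> v n = (\<lambda>t. T \<le> t + (Suc n) * d)" for n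
  proof (induction n)
    case 0 then show ?case using naive by (simp add: trained_strategy_def)
  next
    case (Suc n)
    have "trained_strategy T \<theta> \<beta> v (Suc n) = update_strategy T \<theta> \<beta> v (trained_strategy T \<theta> \<beta> v n)"
      by (simp add: trained_strategy_def)
    also have "\<dots> = (\<lambda>t. T \<le> t + (Suc n * d + d))" using Suc upd[of "Suc n * d"] d1 by simp
    finally show ?case by (simp add: algebra_simps)
  qed
  have soph: "soph_stage T \<theta> \<beta> v k = (\<lambda>_. True)" for k
  proof (induction k)
    case 0 then show ?case by simp
  next
    case (Suc k)
    have lt: "T - Suc k < T" using assms by simp
    have "\<beta> * \<theta> ^ (T - (T - Suc k + 1)) * v \<le> \<theta> ^ (T - (T - Suc k)) * v"
      using cmp_iff[OF assms(3) assms(2), of "T - Suc k" "T - Suc k + 1" T \<beta>] lt PD[of 1] d1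
      by simp
    then show ?case using Suc stop_time_true[OF lt] by (simp add: Let_def)
  qed
  define n where "n = nat \<lceil>real T / real_of_int \<nu>\<rceil>"
  have "real T / real d \<le> real n" unfolding n_def using dn
    by (metis of_int_of_nat_eq of_nat_nat real_nat_ceiling_ge)
  then have "real T \<le> real n * real d" using d1 by (simp add: divide_le_eq)
  then have "T \<le> n * d" by (metis of_nat_le_iff of_nat_mult)
  then have all: "\<And>t. T \<le> t + Suc n * d" by simp
  show ?thesis
    unfolding \<nu>_def[symmetric] Let_def n_def[symmetric]
    using n1 n2 all by (simp add: trained soph soph_strategy_def)
qed

end
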